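(* Let $\mathsf{LTF}^W$ be the class of linear threshold functions $x\mapsto\mathrm{sgn}(w\cdot x+b)$ on $\{0,1\}^n$ with integer weights $w\in\mathbb{Z}^n$ and integer bias $b$ such that the sum of the absolute values of the weights and the bias is at most $W$. Then $\mathsf{LTF}^W$ is distribution-free $\rho$-robustly learnable with access to the example oracle and the $\rho$-local equivalence query oracle, using (a variant of) the Winnow algorithm, with sample complexity $m(n,\epsilon,\delta)=O\left(\frac1\epsilon\left(n+\min\{n,W\}\log(W+n)+\log\frac1\delta\right)\right)$ and local equivalence query complexity $r(n,\epsilon,\delta)=O\left(m(n,\epsilon,\delta)\cdot W^2\log n\right)$.
   Context: $B_\rho(x)$ is the Hamming ball of radius $\rho$ around $x\in\{0,1\}^n$. Robust risk: $\mathsf{R}_\rho(h,c)=\Pr_{x\sim D}[\exists z\in B_\rho(x):h(z)\ne c(z)]$. The example oracle returns $(x,c(x))$, $x\sim D$. Given a sample $S$, the $\rho$-local equivalence query oracle, queried with $(h,x)$ for $x\in S$, either confirms that $h$ and the target $c$ agree on $B_\rho(x)$ or returns $z\in B_\rho(x)$ with $h(z)\ne c(z)$. Robust learnability with sample complexity $m$ and query complexity $r$: for every distribution $D$, target $c$ in the class, and $\epsilon,\delta>0$, using $m$ examples and at most $r$ queries the learner outputs with probability at least $1-\delta$ a hypothesis $h$ with $\mathsf{R}_\rho(h,c)\le\epsilon$. *)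

theory Defs
  imports "HOL-Probability.Probability"
begin

text \<open>Points of the Boolean cube are bool lists of length n; True encodes 1.
  Concepts / hypotheses are predicates on bool lists; the label True encodes +1.\<close>

type_synonym point = "bool list"
type_synonym concept = "point \<Rightarrow> bool"

definition hamming_ball :: "nat \<Rightarrow> point \<Rightarrow> point set" where
  "hamming_ball \<rho> x = {z. length z = length x \<and> card {i. i < length x \<and> z ! i \<noteq> x ! i} \<le> \<rho>}"

definition robust_risk :: "nat \<Rightarrow> point pmf \<Rightarrow> concept \<Rightarrow> concept \<Rightarrow> real" where
  "robust_risk \<rho> D h c = measure_pmf.prob D {x. \<exists>z\<in>hamming_ball \<rho> x. h z \<noteq> c z}"

text \<open>Linear threshold functions with integer weights and bias, total weight at most W;
  sgn(0) = +1 convention.\<close>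
definition ltf_class :: "nat \<Rightarrow> nat \<Rightarrow> concept set" where
  "ltf_class n W = {c. \<exists>(w::nat \<Rightarrow> int) (b::int).
      (\<Sum>i<n. \<bar>w i\<bar>) + \<bar>b\<bar> \<le> int W \<and>
      (\<forall>x. length x = n \<longrightarrow> c x = ((\<Sum>i<n. w i * (if x ! i then 1 else 0)) + b \<ge> 0))}"

datatype move = Query concept point | Output concept

type_synonym transcript = "(concept \<times> point \<times> point option) list"
type_synonym learner = "(point \<times> bool) list \<Rightarrow> transcript \<Rightarrow> move"
type_synonym leq_oracle = "transcript \<Rightarrow> concept \<Rightarrow> point \<Rightarrow> point option"

text \<open>A valid rho-local equivalence query oracle for target c: None = confirmation,
  Some z = counterexample in the ball. It may answer adaptively (depending on the transcript).\<close>
definition valid_leq_oracle :: "nat \<Rightarrow> concept \<Rightarrow> leq_oracle \<Rightarrow> bool" where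
  "valid_leq_oracle \<rho> c Or \<longleftrightarrow> (\<forall>t h x.
      (Or t h x = None \<longrightarrow> (\<forall>z\<in>hamming_ball \<rho> x. h z = c z)) \<and>
      (\<forall>z. Or t h x = Some z \<longrightarrow> z \<in> hamming_ball \<rho> x \<and> h z \<noteq> c z))"

fun run_learner :: "learner \<Rightarrow> (point \<times> bool) list \<Rightarrow> leq_oracle \<Rightarrow> nat \<Rightarrow> transcript \<Rightarrow> concept option" where
  "run_learner L S Or 0 t = (case L S t of Output h \<Rightarrow> Some h | Query _ _ \<Rightarrow> None)"
| "run_learner L S Or (Suc k) t = (case L S t of Output h \<Rightarrow> Some h
     | Query h x \<Rightarrow> (if x \<in> fst ` set S then run_learner L S Or k (t @ [(h, x, Or t h x)]) else None))"

definition learner_succeeds :: "learner \<Rightarrow> nat \<Rightarrow> nat \<Rightarrow> point pmf \<Rightarrow> concept \<Rightarrow> real \<Rightarrow> point list \<Rightarrow> bool" where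
  "learner_succeeds L \<rho> r D c \<epsilon> xs \<longleftrightarrow> (\<forall>Or. valid_leq_oracle \<rho> c Or \<longrightarrow>
      (\<exists>h. run_learner L (map (\<lambda>x. (x, c x)) xs) Or r [] = Some h \<and> robust_risk \<rho> D h c \<le> \<epsilon>))"

definition robustly_learns :: "learner \<Rightarrow> nat \<Rightarrow> concept set \<Rightarrow> nat \<Rightarrow> real \<Rightarrow> real \<Rightarrow> nat \<Rightarrow> nat \<Rightarrow> bool" where
  "robustly_learns L n C \<rho> \<epsilon> \<delta> m r \<longleftrightarrow> (\<forall>D c. set_pmf D \<subseteq> {x. length x = n} \<longrightarrow> c \<in> C \<longrightarrow>
      measure_pmf.prob (replicate_pmf m D) {xs. learner_succeeds L \<rho> r D c \<epsilon> xs} \<ge> 1 - \<delta>)"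

end

theory Submission
  imports Defs
begin

definition pv :: "nat \<Rightarrow> (nat \<Rightarrow> int) \<Rightarrow> point \<Rightarrow> bool" where
  "pv n v x = ((\<Sum>i<n. v i * (if x ! i then 1 else 0)) + v n \<ge> 0)"

definition Pset :: "nat \<Rightarrow> nat \<Rightarrow> (nat \<Rightarrow> int) set" where
  "Pset n W = {v. (\<forall>i>n. v i = 0) \<and> (\<Sum>i\<le>n. \<bar>v i\<bar>) \<le> int W}"

lemma Pset_sub1:
  "Pset n W \<subseteq> (\<lambda>f i. if i \<le> n then f i else 0) ` (PiE {..n} (\<lambda>_. {-int W..int W}))"
proof
  fix v assume v: "v \<in> Pset n W"
  have b: "-int W \<le> v i \<and> v i \<le> int W" if "i \<le> n" for i
  proof -
    have "\<bar>v i\<bar> \<le> (\<Sum>i\<le>n. \<bar>v i\<bar>)"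
      by (rule member_le_sum) (use that in auto)
    then have "\<bar>v i\<bar> \<le> int W" using v by (auto simp: Pset_def)
    then show ?thesis by (simp add: abs_le_iff)
  qed
  have "restrict v {..n} \<in> PiE {..n} (\<lambda>_. {-int W..int W})"
  proof (rule PiE_I)
    fix i assume i: "i \<in> {..n}"
    from b[of i] i show "restrict v {..n} i \<in> {-int W..int W}" by simp
  qed simp
  moreover have "v = (\<lambda>i. if i \<le> n then restrict v {..n} i else 0)"
    using v by (auto simp: Pset_def fun_eq_iff)
  ultimately show "v \<in> (\<lambda>f i. if i \<le> n then f i else 0) ` (PiE {..n} (\<lambda>_. {-int W..int W}))"
    by blast
qed

lemma Pset_finite: "finite (Pset n W)"
  by (rule finite_subset[OF Pset_sub1]) (intro finite_imageI finite_PiE; auto)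

lemma Pset_card1: "card (Pset n W) \<le> (2*W+1)^(n+1)"
proof -
  have "card (Pset n W) \<le> card ((\<lambda>f i. if i \<le> n then f i else 0) ` (PiE {..n} (\<lambda>_. {-int W..int W})))"
    by (rule card_mono[OF _ Pset_sub1]) (intro finite_imageI finite_PiE; auto)
  also have "\<dots> \<le> card (PiE {..n} (\<lambda>_. {-int W..int W}))"
    by (rule card_image_le) (intro finite_PiE; auto)
  also have "\<dots> = (2*W+1)^(n+1)"
    by (simp add: card_PiE nat_add_distrib nat_mult_distrib)
  finally show ?thesis .
qed

lemma zero_in_Pset: "(\<lambda>_. 0) \<in> Pset n W"
  by (simp add: Pset_def)

definition Umv :: "nat \<Rightarrow> (nat \<Rightarrow> int) set" where
  "Umv n = insert (\<lambda>_. 0) ((\<lambda>(j,s) i. if i = j then s else 0) ` ({..n} \<times> {1,-1}))"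

lemma Umv_card: "card (Umv n) \<le> 2*n+3"
proof -
  have "card (Umv n) \<le> Suc (card ((\<lambda>(j,s) i. if i = j then (s::int) else 0) ` ({..n} \<times> {1,-1})))"
    unfolding Umv_def by (rule card_insert_le_m1) auto
  also have "card ((\<lambda>(j,s) i. if i = j then (s::int) else 0) ` ({..n} \<times> {1,-1})) \<le> card ({..n} \<times> {1::int,-1})"
    by (rule card_image_le) auto
  also have "card ({..n} \<times> {1::int,-1}) = 2*(n+1)"
    by (simp add: card_cartesian_product)
  finally show ?thesis by simp
qed

lemma Pset_step:
  "Pset n (Suc W) \<subseteq> (\<lambda>(p,u) i. p i + u i) ` (Pset n W \<times> Umv n)"
proof
  fix v assume v: "v \<in> Pset n (Suc W)"
  show "v \<in> (\<lambda>(p,u) i. p i + u i) ` (Pset n W \<times> Umv n)"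
  proof (cases "(\<Sum>i\<le>n. \<bar>v i\<bar>) \<le> int W")
    case True
    then have "v \<in> Pset n W" using v by (auto simp: Pset_def)
    moreover have "(\<lambda>_. 0) \<in> Umv n" by (simp add: Umv_def)
    ultimately show ?thesis by (intro image_eqI[of _ _ "(v, \<lambda>_. 0)"]) auto
  next
    case False
    have "\<exists>j\<in>{..n}. v j \<noteq> 0"
    proof (rule ccontr)
      assume "\<not> ?thesis"
      then have "(\<Sum>i\<le>n. \<bar>v i\<bar>) = 0" by simp
      with False show False by simp
    qed
    then obtain j where j: "j \<le> n" "v j \<noteq> 0" by auto
    define s where "s = sgn (v j)"
    define p where "p = v(j := v j - s)"
    define u where "u = (\<lambda>i. if i = j then s else 0)"
    have s: "s = 1 \<or> s = -1" using j by (auto simp: s_def sgn_if)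
    have u: "u \<in> Umv n" using j s unfolding Umv_def u_def by force
    have ab: "\<bar>v j - s\<bar> = \<bar>v j\<bar> - 1" using j by (auto simp: s_def sgn_if)
    have "(\<Sum>i\<le>n. \<bar>p i\<bar>) = \<bar>p j\<bar> + (\<Sum>i\<in>{..n}-{j}. \<bar>p i\<bar>)"
      using j by (subst sum.remove[of _ j]) auto
    also have "(\<Sum>i\<in>{..n}-{j}. \<bar>p i\<bar>) = (\<Sum>i\<in>{..n}-{j}. \<bar>v i\<bar>)"
      by (rule sum.cong) (auto simp: p_def)
    also have "\<bar>p j\<bar> = \<bar>v j\<bar> - 1" using ab by (simp add: p_def)
    also have "(\<Sum>i\<in>{..n}-{j}. \<bar>v i\<bar>) = (\<Sum>i\<le>n. \<bar>v i\<bar>) - \<bar>v j\<bar>"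
      using j by (subst sum.remove[of _ j]) auto
    finally have "(\<Sum>i\<le>n. \<bar>p i\<bar>) = (\<Sum>i\<le>n. \<bar>v i\<bar>) - 1" by simp
    then have "p \<in> Pset n W" using v j by (auto simp: Pset_def p_def)
    moreover have "v = (\<lambda>i. p i + u i)" by (auto simp: p_def u_def fun_eq_iff)
    ultimately show ?thesis using u by (intro image_eqI[of _ _ "(p, u)"]) auto
  qed
qed

lemma Umv_finite: "finite (Umv n)" by (simp add: Umv_def)

lemma Pset_card2: "card (Pset n W) \<le> (2*n+3)^W"
proof (induction W)
  case 0
  have "Pset n 0 \<subseteq> {\<lambda>_. 0}"
  proof
    fix v assume v: "v \<in> Pset n 0"
    have "\<forall>i\<in>{..n}. \<bar>v i\<bar> = 0"
      using v by (subst sum_nonneg_eq_0_iff[symmetric]) (auto simp: Pset_def intro: antisym)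
    then have "v x = 0" for x using v by (cases "x \<le> n") (auto simp: Pset_def)
    then show "v \<in> {\<lambda>_. 0}" by auto
  qed
  then have "card (Pset n 0) \<le> card {\<lambda>_::nat. 0::int}" by (rule card_mono[rotated]) simp
  then show ?case by simp
next
  case (Suc W)
  have "card (Pset n (Suc W)) \<le> card ((\<lambda>(p,u) i. p i + u i) ` (Pset n W \<times> Umv n))"
    by (rule card_mono[OF _ Pset_step]) (auto intro: Pset_finite Umv_finite)
  also have "\<dots> \<le> card (Pset n W \<times> Umv n)"
    by (rule card_image_le) (auto intro: Pset_finite Umv_finite)
  also have "\<dots> = card (Pset n W) * card (Umv n)" by (simp add: card_cartesian_product)
  also have "\<dots> \<le> (2*n+3)^W * (2*n+3)" using Suc Umv_card by (intro mult_mono) auto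
  finally show ?case by (simp add: mult.commute)
qed
definition cons_t :: "nat \<Rightarrow> nat \<Rightarrow> (nat \<Rightarrow> int) \<Rightarrow> transcript \<Rightarrow> bool" where
  "cons_t n \<rho> v t = (\<forall>e\<in>set t. case e of (h, x, a) \<Rightarrow> (case a of
      None \<Rightarrow> (\<forall>z\<in>hamming_ball \<rho> x. pv n v z = h z)
    | Some z \<Rightarrow> pv n v z \<noteq> h z))"

definition VS :: "nat \<Rightarrow> nat \<Rightarrow> nat \<Rightarrow> transcript \<Rightarrow> (nat \<Rightarrow> int) set" where
  "VS n W \<rho> t = {v \<in> Pset n W. cons_t n \<rho> v t}"

definition maj :: "nat \<Rightarrow> (nat \<Rightarrow> int) set \<Rightarrow> concept" where
  "maj n V z = (card V \<le> 2 * card {v\<in>V. pv n v z})"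

definition undet :: "nat \<Rightarrow> nat \<Rightarrow> (nat \<Rightarrow> int) set \<Rightarrow> point \<Rightarrow> bool" where
  "undet n \<rho> V x = (\<exists>z\<in>hamming_ball \<rho> x. \<exists>v1\<in>V. \<exists>v2\<in>V. pv n v1 z \<noteq> pv n v2 z)"

definition Lrn :: "nat \<Rightarrow> nat \<Rightarrow> nat \<Rightarrow> learner" where
  "Lrn n W \<rho> S t = (if \<exists>x\<in>fst ` set S. undet n \<rho> (VS n W \<rho> t) x
     then Query (maj n (VS n W \<rho> t)) (SOME x. x \<in> fst ` set S \<and> undet n \<rho> (VS n W \<rho> t) x)
     else Output (pv n (SOME v. v \<in> VS n W \<rho> t)))"

lemma VS_snoc: "VS n W \<rho> (t @ [(h, x, a)]) = {v \<in> VS n W \<rho> t. case a of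
      None \<Rightarrow> (\<forall>z\<in>hamming_ball \<rho> x. pv n v z = h z)
    | Some z \<Rightarrow> pv n v z \<noteq> h z}"
  by (cases a) (auto simp: VS_def cons_t_def)

lemma VS_finite: "finite (VS n W \<rho> t)"
  using Pset_finite by (auto simp: VS_def)

lemma ball_len: "z \<in> hamming_ball \<rho> x \<Longrightarrow> length z = length x"
  by (simp add: hamming_ball_def)

lemma undet_mono: "V' \<subseteq> V \<Longrightarrow> undet n \<rho> V' x \<Longrightarrow> undet n \<rho> V x"
  unfolding undet_def by blast

lemma halving:
  assumes "finite V"
  shows "2 * card {v\<in>V. pv n v z \<noteq> maj n V z} \<le> card V"
proof -
  have split: "card V = card {v\<in>V. pv n v z} + card {v\<in>V. \<not> pv n v z}"
    using assms by (subst card_Un_disjoint[symmetric]) (auto intro: arg_cong[where f=card])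
  show ?thesis
  proof (cases "maj n V z")
    case True
    then have "{v\<in>V. pv n v z \<noteq> maj n V z} = {v\<in>V. \<not> pv n v z}" by auto
    with True split show ?thesis by (simp add: maj_def)
  next
    case False
    then have "{v\<in>V. pv n v z \<noteq> maj n V z} = {v\<in>V. pv n v z}" by auto
    with False split show ?thesis by (simp add: maj_def)
  qed
qed

lemma agree_nu:
  assumes "\<not> (\<exists>x\<in>X. undet n \<rho> V x)" "v \<in> V" "vc \<in> V" "x \<in> X" "z \<in> hamming_ball \<rho> x"
  shows "pv n v z = pv n vc z"
proof -
  from assms(1,4) have "\<not> undet n \<rho> V x" by blast
  then show ?thesis using assms(2,3,5) unfolding undet_def by blast
qed

lemma run_main:
  fixes n W \<rho> :: nat and c :: concept and Or :: leq_oracle and S :: "(point \<times> bool) list" and vc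
  assumes valid: "valid_leq_oracle \<rho> c Or"
    and vcP: "vc \<in> Pset n W"
    and lenS: "\<forall>x\<in>fst ` set S. length x = n"
    and cvc: "\<forall>z. length z = n \<longrightarrow> c z = pv n vc z"
  shows "\<forall>t i j. vc \<in> VS n W \<rho> t \<longrightarrow> card {x\<in>fst ` set S. undet n \<rho> (VS n W \<rho> t) x} \<le> i
     \<longrightarrow> card (VS n W \<rho> t) \<le> 2^j \<longrightarrow> i + j \<le> k \<longrightarrow>
     (\<exists>v\<in>Pset n W. run_learner (Lrn n W \<rho>) S Or k t = Some (pv n v) \<and>
        (\<forall>x\<in>fst ` set S. \<forall>z\<in>hamming_ball \<rho> x. pv n v z = c z))"
proof (induction k)
  case 0
  show ?case
  proof (intro allI impI)
    fix t i j
    assume a: "vc \<in> VS n W \<rho> t" "card {x\<in>fst ` set S. undet n \<rho> (VS n W \<rho> t) x} \<le> i"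
      "card (VS n W \<rho> t) \<le> 2^j" "i + j \<le> 0"
    have nu: "\<not> (\<exists>x\<in>fst ` set S. undet n \<rho> (VS n W \<rho> t) x)"
    proof
      assume "\<exists>x\<in>fst ` set S. undet n \<rho> (VS n W \<rho> t) x"
      then have "{x\<in>fst ` set S. undet n \<rho> (VS n W \<rho> t) x} \<noteq> {}" by auto
      then have "card {x\<in>fst ` set S. undet n \<rho> (VS n W \<rho> t) x} \<noteq> 0" by simp
      with a show False by simp
    qed
    define v where "v = (SOME v. v \<in> VS n W \<rho> t)"
    have v: "v \<in> VS n W \<rho> t" unfolding v_def using a(1) by (rule someI[of "\<lambda>v. v \<in> VS n W \<rho> t"])
    show "\<exists>v\<in>Pset n W. run_learner (Lrn n W \<rho>) S Or 0 t = Some (pv n v) \<and>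
        (\<forall>x\<in>fst ` set S. \<forall>z\<in>hamming_ball \<rho> x. pv n v z = c z)"
    proof (intro bexI conjI ballI)
      show "run_learner (Lrn n W \<rho>) S Or 0 t = Some (pv n v)"
        using nu by (simp add: Lrn_def v_def)
      show "v \<in> Pset n W" using v by (simp add: VS_def)
      fix x z assume x: "x \<in> fst ` set S" and z: "z \<in> hamming_ball \<rho> x"
      have "pv n v z = pv n vc z" using agree_nu[OF nu v a(1) x z] .
      also have "\<dots> = c z" using cvc lenS x ball_len[OF z] by auto
      finally show "pv n v z = c z" .
    qed
  qed
next
  case (Suc k)
  show ?case
  proof (intro allI impI)
    fix t i j
    assume a: "vc \<in> VS n W \<rho> t" "card {x\<in>fst ` set S. undet n \<rho> (VS n W \<rho> t) x} \<le> i"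
      "card (VS n W \<rho> t) \<le> 2^j" "i + j \<le> Suc k"
    show "\<exists>v\<in>Pset n W. run_learner (Lrn n W \<rho>) S Or (Suc k) t = Some (pv n v) \<and>
        (\<forall>x\<in>fst ` set S. \<forall>z\<in>hamming_ball \<rho> x. pv n v z = c z)"
    proof (cases "\<exists>x\<in>fst ` set S. undet n \<rho> (VS n W \<rho> t) x")
      case False
      define v where "v = (SOME v. v \<in> VS n W \<rho> t)"
      have v: "v \<in> VS n W \<rho> t" unfolding v_def using a(1) by (rule someI[of "\<lambda>v. v \<in> VS n W \<rho> t"])
      show ?thesis
      proof (intro bexI conjI ballI)
        show "run_learner (Lrn n W \<rho>) S Or (Suc k) t = Some (pv n v)"
          using False by (simp add: Lrn_def v_def)
        show "v \<in> Pset n W" using v by (simp add: VS_def)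
        fix x z assume x: "x \<in> fst ` set S" and z: "z \<in> hamming_ball \<rho> x"
        have "pv n v z = pv n vc z" using agree_nu[OF False v a(1) x z] .
        also have "\<dots> = c z" using cvc lenS x ball_len[OF z] by auto
        finally show "pv n v z = c z" .
      qed
    next
      case True
      define V where "V = VS n W \<rho> t"
      define x0 where "x0 = (SOME x. x \<in> fst ` set S \<and> undet n \<rho> V x)"
      have x0: "x0 \<in> fst ` set S" "undet n \<rho> V x0"
        unfolding x0_def using someI_ex[OF True[unfolded Bex_def]] by (auto simp: V_def)
      define hq where "hq = maj n V"
      define t' where "t' = t @ [(hq, x0, Or t hq x0)]"
      have run: "run_learner (Lrn n W \<rho>) S Or (Suc k) t = run_learner (Lrn n W \<rho>) S Or k t'"
        using True x0(1) by (simp add: Lrn_def t'_def hq_def x0_def V_def)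
      have sub: "VS n W \<rho> t' \<subseteq> V" by (auto simp: t'_def V_def VS_snoc)
      have Usub: "{x\<in>fst ` set S. undet n \<rho> (VS n W \<rho> t') x} \<subseteq> {x\<in>fst ` set S. undet n \<rho> V x}"
        using sub undet_mono by blast
      have finU: "finite {x\<in>fst ` set S. undet n \<rho> V x}" by simp
      have IH: "\<exists>v\<in>Pset n W. run_learner (Lrn n W \<rho>) S Or k t' = Some (pv n v) \<and>
        (\<forall>x\<in>fst ` set S. \<forall>z\<in>hamming_ball \<rho> x. pv n v z = c z)"
      proof (cases "Or t hq x0")
        case None
        have ok: "\<forall>z\<in>hamming_ball \<rho> x0. hq z = c z" using valid None
          unfolding valid_leq_oracle_def by blast
        have VS': "VS n W \<rho> t' = {v\<in>V. \<forall>z\<in>hamming_ball \<rho> x0. pv n v z = hq z}"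
          using None by (simp add: t'_def V_def VS_snoc)
        have vc': "vc \<in> VS n W \<rho> t'"
        proof -
          have "pv n vc z = hq z" if z: "z \<in> hamming_ball \<rho> x0" for z
          proof -
            have "length z = n" using lenS x0(1) ball_len[OF z] by auto
            then show ?thesis using cvc ok z by auto
          qed
          then show ?thesis unfolding VS' using a(1) V_def by auto
        qed
        have "\<not> undet n \<rho> (VS n W \<rho> t') x0" unfolding VS' undet_def by auto
        then have "{x\<in>fst ` set S. undet n \<rho> (VS n W \<rho> t') x} \<subset> {x\<in>fst ` set S. undet n \<rho> V x}"
          using Usub x0 by blast
        then have "card {x\<in>fst ` set S. undet n \<rho> (VS n W \<rho> t') x} < card {x\<in>fst ` set S. undet n \<rho> V x}"
          using finU by (rule psubset_card_mono[rotated])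
        then have c1: "card {x\<in>fst ` set S. undet n \<rho> (VS n W \<rho> t') x} \<le> i - 1"
          using a(2) V_def by simp
        have "card (VS n W \<rho> t') \<le> card V" by (rule card_mono[OF _ sub]) (simp add: V_def VS_finite)
        then have c2: "card (VS n W \<rho> t') \<le> 2^j"
          using a(3) V_def by simp
        have "i \<ge> 1" using c1 a(2) \<open>card _ < card _\<close> V_def by simp
        then have "(i - 1) + j \<le> k" using a(4) by simp
        then show ?thesis using Suc.IH vc' c1 c2 by blast
      next
        case (Some z)
        have zb: "z \<in> hamming_ball \<rho> x0" and hz: "hq z \<noteq> c z" using valid Some
          unfolding valid_leq_oracle_def by blast+
        have VS': "VS n W \<rho> t' = {v\<in>V. pv n v z \<noteq> maj n V z}"
          using Some by (simp add: t'_def V_def VS_snoc hq_def)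
        have "length z = n" using lenS x0(1) ball_len[OF zb] by auto
        then have "c z = pv n vc z" using cvc by auto
        then have vc': "vc \<in> VS n W \<rho> t'"
          unfolding VS' using a(1) hz V_def hq_def by auto
        have h2: "2 * card (VS n W \<rho> t') \<le> card V"
          unfolding VS' by (rule halving) (simp add: V_def VS_finite)
        have "card (VS n W \<rho> t') \<noteq> 0" using vc' VS_finite by (metis card_0_eq empty_iff)
        then have "j \<ge> 1"
        proof -
          have "2 * 1 \<le> 2 * card (VS n W \<rho> t')" using \<open>card (VS n W \<rho> t') \<noteq> 0\<close> by simp
          also have "\<dots> \<le> 2^j" using h2 a(3) V_def by simp
          finally show ?thesis by (cases j) auto
        qed
        then have c2: "card (VS n W \<rho> t') \<le> 2^(j-1)"
          using h2 a(3) V_def by (cases j) auto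
        have c1: "card {x\<in>fst ` set S. undet n \<rho> (VS n W \<rho> t') x} \<le> i"
          using card_mono[OF finU Usub] a(2) V_def by simp
        have "i + (j - 1) \<le> k" using a(4) \<open>j \<ge> 1\<close> by simp
        then show ?thesis using Suc.IH vc' c1 c2 by blast
      qed
      then show ?thesis using run by simp
    qed
  qed
qed
lemma rep_all:
  fixes p :: "'a pmf"
  shows "emeasure (measure_pmf (replicate_pmf m p)) {xs. set xs \<subseteq> A} = emeasure (measure_pmf p) A ^ m"
proof (induction m)
  case 0
  then show ?case by simp
next
  case (Suc m)
  have "emeasure (measure_pmf (replicate_pmf (Suc m) p)) {xs. set xs \<subseteq> A}
     = (\<integral>\<^sup>+x. (\<integral>\<^sup>+xs. indicator A x * indicator {xs. set xs \<subseteq> A} xs \<partial>replicate_pmf m p) \<partial>p)"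
    apply simp
    apply (intro nn_integral_cong)
    apply (auto simp: indicator_def)
    done
  also have "\<dots> = (\<integral>\<^sup>+x. indicator A x * emeasure (measure_pmf (replicate_pmf m p)) {xs. set xs \<subseteq> A} \<partial>p)"
    by (simp add: nn_integral_cmult)
  also have "\<dots> = emeasure (measure_pmf p) A * emeasure (measure_pmf (replicate_pmf m p)) {xs. set xs \<subseteq> A}"
    by (simp add: nn_integral_multc)
  finally show ?case using Suc by (simp add: mult.commute)
qed

lemma rep_all_prob:
  fixes p :: "'a pmf"
  shows "measure_pmf.prob (replicate_pmf m p) {xs. set xs \<subseteq> A} = measure_pmf.prob p A ^ m"
  using rep_all[of m p A]
  by (simp add: measure_pmf.emeasure_eq_measure ennreal_power)

lemma VS_nil: "VS n W \<rho> [] = Pset n W"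
  by (simp add: VS_def cons_t_def)

lemma two_pow: "2 * W + 1 \<le> (2::nat) ^ (2 * W)"
proof (induction W)
  case 0 then show ?case by simp
next
  case (Suc W)
  have "2 * Suc W + 1 \<le> 4 * (2 * W + 1)" by simp
  also have "\<dots> \<le> 4 * 2 ^ (2 * W)" using Suc by simp
  also have "\<dots> = 2 ^ (2 * Suc W)" by (simp add: power_add)
  finally show ?case .
qed

lemma Pset_card_pow: "card (Pset n W) \<le> 2 ^ (2 * W * (n + 1))"
proof -
  have "card (Pset n W) \<le> (2*W+1)^(n+1)" by (rule Pset_card1)
  also have "\<dots> \<le> (2 ^ (2 * W)) ^ (n + 1)" by (rule power_mono[OF two_pow]) simp
  also have "\<dots> = 2 ^ (2 * W * (n + 1))" by (rule power_mult[symmetric])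
  finally show ?thesis .
qed

lemma Pset_card_pos: "card (Pset n W) \<ge> 1"
  using zero_in_Pset[of n W] Pset_finite[of n W]
  by (metis One_nat_def Suc_leI card_gt_0_iff empty_iff)

lemma ln_card:
  assumes n: "2 \<le> n" and W: "1 \<le> W"
  shows "ln (real (card (Pset n W))) \<le> 4 * real (min n W) * ln (real (W + n))"
proof -
  have cp: "real (card (Pset n W)) > 0" using Pset_card_pos[of n W] by simp
  have lnpos: "ln (real (W + n)) \<ge> 0" using n by simp
  have b1: "ln (real (card (Pset n W))) \<le> 4 * real n * ln (real (W + n))"
  proof -
    have "real (card (Pset n W)) \<le> real ((2*W+1)^(n+1))" using Pset_card1[of n W] by (simp only: of_nat_le_iff)
    then have "ln (real (card (Pset n W))) \<le> ln (real ((2*W+1)^(n+1)))"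
      using cp by (rule ln_mono)
    also have "\<dots> = real (n+1) * ln (real (2*W+1))" by (simp only: of_nat_power ln_realpow)
    also have "real (2*W+1) \<le> real ((W + n)^2)"
    proof -
      have "(W+n)*2 \<le> (W+n)*(W+n)" using n by (intro mult_le_mono) auto
      then have "2*W+1 \<le> (W+n)^2" using n by (simp add: power2_eq_square)
      then show ?thesis by linarith
    qed
    then have "ln (real (2*W+1)) \<le> ln (real ((W+n)^2))" by (rule ln_mono) simp
    then have "ln (real (2*W+1)) \<le> 2 * ln (real (W+n))" by (simp only: of_nat_power ln_realpow)
    then have "real (n+1) * ln (real (2*W+1)) \<le> real (n+1) * (2 * ln (real (W+n)))"
      by (intro mult_left_mono) auto
    also have "\<dots> \<le> real (2*n) * (2 * ln (real (W+n)))"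
      using n lnpos by (intro mult_right_mono) auto
    finally show ?thesis by simp
  qed
  have b2: "ln (real (card (Pset n W))) \<le> 4 * real W * ln (real (W + n))"
  proof -
    have "real (card (Pset n W)) \<le> real ((2*n+3)^W)" using Pset_card2[of n W] by (simp only: of_nat_le_iff)
    then have "ln (real (card (Pset n W))) \<le> ln (real ((2*n+3)^W))"
      using cp by (rule ln_mono)
    also have "\<dots> = real W * ln (real (2*n+3))" by (simp only: of_nat_power ln_realpow)
    also have "real (2*n+3) \<le> real ((W + n)^2)"
    proof -
      have "(1+n)*(1+n) \<le> (W+n)*(W+n)" using W by (intro mult_le_mono) auto
      moreover have "2*2 \<le> n*n" using mult_le_mono[OF n n] .
      ultimately have "2*n+3 \<le> (W+n)^2" by (simp add: power2_eq_square algebra_simps)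
      then show ?thesis by linarith
    qed
    then have "ln (real (2*n+3)) \<le> ln (real ((W+n)^2))" by (rule ln_mono) simp
    then have "ln (real (2*n+3)) \<le> 2 * ln (real (W+n))" by (simp only: of_nat_power ln_realpow)
    then have "real W * ln (real (2*n+3)) \<le> real W * (2 * ln (real (W+n)))"
      by (intro mult_left_mono) auto
    also have "\<dots> \<le> 4 * real W * ln (real (W + n))" using lnpos by simp
    finally show ?thesis by simp
  qed
  show ?thesis
  proof (cases "n \<le> W")
    case True then show ?thesis using b1 by (simp add: min_def)
  next
    case False then show ?thesis using b2 by (simp add: min_def)
  qed
qed

lemma c_repr:
  assumes "c \<in> ltf_class n W"
  shows "\<exists>vc\<in>Pset n W. \<forall>z. length z = n \<longrightarrow> c z = pv n vc z"
proof -
  obtain w b where wb: "(\<Sum>i<n. \<bar>w i\<bar>) + \<bar>b\<bar> \<le> int W"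
    "\<forall>x. length x = n \<longrightarrow> c x = ((\<Sum>i<n. w i * (if x ! i then 1 else 0)) + b \<ge> 0)"
    using assms by (auto simp: ltf_class_def)
  define vc where "vc = (\<lambda>i. if i < n then w i else if i = n then b else 0)"
  have s1: "(\<Sum>i<n. \<bar>vc i\<bar>) = (\<Sum>i<n. \<bar>w i\<bar>)" by (rule sum.cong) (auto simp: vc_def)
  have "(\<Sum>i\<le>n. \<bar>vc i\<bar>) = (\<Sum>i<n. \<bar>vc i\<bar>) + \<bar>vc n\<bar>"
    by (simp add: lessThan_Suc_atMost[symmetric])
  then have "(\<Sum>i\<le>n. \<bar>vc i\<bar>) = (\<Sum>i<n. \<bar>w i\<bar>) + \<bar>b\<bar>" using s1 by (simp add: vc_def)
  then have "vc \<in> Pset n W" using wb(1) by (auto simp: Pset_def vc_def)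
  moreover have "c z = pv n vc z" if "length z = n" for z
  proof -
    have "(\<Sum>i<n. vc i * (if z ! i then 1 else 0)) = (\<Sum>i<n. w i * (if z ! i then 1 else 0))"
      by (rule sum.cong) (auto simp: vc_def)
    then show ?thesis using wb(2) that by (simp add: pv_def vc_def)
  qed
  ultimately show ?thesis by blast
qed

lemma ln2_half: "ln (2::real) \<ge> 1/2"
proof -
  have "ln (1/2::real) \<le> 1/2 - 1" by (rule ln_le_minus_one) simp
  then show ?thesis by (simp add: ln_div)
qed

lemma prob_main:
  fixes n W \<rho> m :: nat and D :: "point pmf" and c :: concept and \<epsilon> :: real
  assumes D: "set_pmf D \<subseteq> {x. length x = n}" and c: "c \<in> ltf_class n W"
    and eps: "0 < \<epsilon>" and eps1: "\<epsilon> \<le> 1"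
  shows "measure_pmf.prob (replicate_pmf m D)
     {xs. \<not> learner_succeeds (Lrn n W \<rho>) \<rho> (m + 2 * W * (n + 1)) D c \<epsilon> xs}
     \<le> real (card (Pset n W)) * (1 - \<epsilon>) ^ m"
proof -
  obtain vc where vcP: "vc \<in> Pset n W" and cvc: "\<forall>z. length z = n \<longrightarrow> c z = pv n vc z"
    using c_repr[OF c] by blast
  define H where "H = pv n ` Pset n W"
  define A where "A = (\<lambda>h. {x. \<forall>z\<in>hamming_ball \<rho> x. h z = c z})"
  define Bad where "Bad = {h\<in>H. robust_risk \<rho> D h c > \<epsilon>}"
  have finH: "finite H" using Pset_finite by (simp add: H_def)
  have finBad: "finite Bad" using finH by (simp add: Bad_def)
  have cover: "{xs. \<not> learner_succeeds (Lrn n W \<rho>) \<rho> (m + 2 * W * (n + 1)) D c \<epsilon> xs}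
      \<inter> set_pmf (replicate_pmf m D) \<subseteq> (\<Union>h\<in>Bad. {xs. set xs \<subseteq> A h})"
  proof
    fix xs assume xs: "xs \<in> {xs. \<not> learner_succeeds (Lrn n W \<rho>) \<rho> (m + 2 * W * (n + 1)) D c \<epsilon> xs}
      \<inter> set_pmf (replicate_pmf m D)"
    then have setxs: "set xs \<subseteq> set_pmf D" and lxs: "length xs = m"
      by (auto simp: set_replicate_pmf)
    from xs obtain Or where valid: "valid_leq_oracle \<rho> c Or" and
      fail: "\<not> (\<exists>h. run_learner (Lrn n W \<rho>) (map (\<lambda>x. (x, c x)) xs) Or (m + 2 * W * (n + 1)) [] = Some h
              \<and> robust_risk \<rho> D h c \<le> \<epsilon>)"
      by (auto simp: learner_succeeds_def)
    define S where "S = map (\<lambda>x. (x, c x)) xs"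
    have fS: "fst ` set S = set xs" by (simp add: S_def image_image)
    have lenS: "\<forall>x\<in>fst ` set S. length x = n" using fS setxs D by auto
    have c1: "card {x\<in>fst ` set S. undet n \<rho> (VS n W \<rho> []) x} \<le> m"
    proof -
      have "card {x\<in>fst ` set S. undet n \<rho> (VS n W \<rho> []) x} \<le> card (set xs)"
        by (rule card_mono) (auto simp: fS)
      also have "\<dots> \<le> m" using lxs card_length[of xs] by simp
      finally show ?thesis .
    qed
    have c2: "card (VS n W \<rho> []) \<le> 2 ^ (2 * W * (n + 1))" using Pset_card_pow by (simp add: VS_nil)
    have vc0: "vc \<in> VS n W \<rho> []" using vcP by (simp add: VS_nil)
    have "\<exists>v\<in>Pset n W. run_learner (Lrn n W \<rho>) S Or (m + 2 * W * (n + 1)) [] = Some (pv n v) \<and>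
        (\<forall>x\<in>fst ` set S. \<forall>z\<in>hamming_ball \<rho> x. pv n v z = c z)"
      using run_main[where k="m + 2 * W * (n + 1)", OF valid vcP lenS cvc, rule_format, OF vc0 c1 c2] by simp
    then obtain v where vP: "v \<in> Pset n W"
      and run: "run_learner (Lrn n W \<rho>) S Or (m + 2 * W * (n + 1)) [] = Some (pv n v)"
      and ag: "\<forall>x\<in>fst ` set S. \<forall>z\<in>hamming_ball \<rho> x. pv n v z = c z"
      by (elim bexE conjE) (intro that)
    have "robust_risk \<rho> D (pv n v) c > \<epsilon>" using fail run by (auto simp: S_def)
    then have "pv n v \<in> Bad" using vP by (auto simp: Bad_def H_def)
    moreover have "set xs \<subseteq> A (pv n v)" using ag fS by (auto simp: A_def)
    ultimately show "xs \<in> (\<Union>h\<in>Bad. {xs. set xs \<subseteq> A h})" by blast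
  qed
  have "measure_pmf.prob (replicate_pmf m D)
     {xs. \<not> learner_succeeds (Lrn n W \<rho>) \<rho> (m + 2 * W * (n + 1)) D c \<epsilon> xs}
     = measure_pmf.prob (replicate_pmf m D)
     ({xs. \<not> learner_succeeds (Lrn n W \<rho>) \<rho> (m + 2 * W * (n + 1)) D c \<epsilon> xs} \<inter> set_pmf (replicate_pmf m D))"
    by (simp add: measure_Int_set_pmf)
  also have "\<dots> \<le> measure_pmf.prob (replicate_pmf m D) (\<Union>h\<in>Bad. {xs. set xs \<subseteq> A h})"
    by (rule measure_pmf.finite_measure_mono[OF cover]) simp
  also have "\<dots> \<le> (\<Sum>h\<in>Bad. measure_pmf.prob (replicate_pmf m D) {xs. set xs \<subseteq> A h})"
    by (rule measure_pmf.finite_measure_subadditive_finite[OF finBad]) simp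
  also have "\<dots> \<le> (\<Sum>h\<in>Bad. (1 - \<epsilon>) ^ m)"
  proof (rule sum_mono)
    fix h assume h: "h \<in> Bad"
    have "robust_risk \<rho> D h c = measure_pmf.prob D (UNIV - A h)"
      unfolding robust_risk_def A_def by (rule arg_cong[where f="measure_pmf.prob D"]) auto
    also have "\<dots> = 1 - measure_pmf.prob D (A h)"
      using measure_pmf.prob_compl[of "A h" D] by simp
    finally have "measure_pmf.prob D (A h) < 1 - \<epsilon>" using h by (simp add: Bad_def)
    then show "measure_pmf.prob (replicate_pmf m D) {xs. set xs \<subseteq> A h} \<le> (1 - \<epsilon>) ^ m"
      unfolding rep_all_prob by (intro power_mono) auto
  qed
  also have "\<dots> = real (card Bad) * (1 - \<epsilon>) ^ m" by simp
  also have "\<dots> \<le> real (card (Pset n W)) * (1 - \<epsilon>) ^ m"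
  proof -
    have "card Bad \<le> card H" using finH by (intro card_mono) (auto simp: Bad_def)
    also have "card H \<le> card (Pset n W)" unfolding H_def by (rule card_image_le[OF Pset_finite])
    finally show ?thesis using eps1 by (intro mult_right_mono) auto
  qed
  finally show ?thesis .
qed
theorem theorem6p5:
  "\<exists>C>0. \<forall>(n::nat) (W::nat) (\<rho>::nat) (\<epsilon>::real) (\<delta>::real).
     2 \<le> n \<longrightarrow> 1 \<le> W \<longrightarrow> 0 < \<epsilon> \<longrightarrow> \<epsilon> < 1 \<longrightarrow> 0 < \<delta> \<longrightarrow> \<delta> < 1 \<longrightarrow>
     (\<exists>(L::learner) (m::nat) (r::nat).
        real m \<le> C * (1 / \<epsilon>) * (real n + real (min n W) * ln (real (W + n)) + ln (1 / \<delta>)) \<and>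
        real r \<le> C * real m * (real W)^2 * ln (real n) \<and>
        robustly_learns L n (ltf_class n W) \<rho> \<epsilon> \<delta> m r)"
proof (intro exI[of _ "16::real"] conjI allI impI)
  show "(0::real) < 16" by simp
  fix n W \<rho> :: nat and \<epsilon> \<delta> :: real
  assume n: "2 \<le> n" and W: "1 \<le> W" and e0: "0 < \<epsilon>" and e1: "\<epsilon> < 1"
    and d0: "0 < \<delta>" and d1: "\<delta> < 1"
  define T where "T = real n + real (min n W) * ln (real (W + n)) + ln (1 / \<delta>)"
  define K where "K = real n + 4 * real (min n W) * ln (real (W + n)) + ln (1 / \<delta>)"
  define m where "m = nat \<lceil>K / \<epsilon>\<rceil>"
  define r where "r = m + 2 * W * (n + 1)"
  have lnWn: "ln (real (W+n)) \<ge> 0" using n by simp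
  have lnd: "ln (1/\<delta>) \<ge> 0" using d0 d1 by simp
  have mlnn: "real (min n W) * ln (real (W + n)) \<ge> 0" using lnWn by simp
  have Kn: "K \<ge> real n" using mlnn lnd by (simp add: K_def)
  have Tn: "T \<ge> 0" using mlnn lnd by (simp add: T_def)
  have KT: "K + real n \<le> 16 * T" using mlnn lnd by (simp add: K_def T_def)
  have Ke0: "0 \<le> K / \<epsilon>" using Kn e0 by simp
  have ceil0: "0 \<le> \<lceil>K / \<epsilon>\<rceil>" using Ke0 by simp
  have mK: "real m \<ge> K / \<epsilon>" unfolding m_def using ceil0
    by simp
  have mK2: "real m \<le> K / \<epsilon> + 1" unfolding m_def using ceil0
    using ceiling_correct[of "K / \<epsilon>"] by simp
  have K0: "0 \<le> K" using Kn by (meson of_nat_0_le_iff order_trans)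
  have "K * \<epsilon> \<le> K * 1" using K0 e1 by (intro mult_left_mono) auto
  then have KE: "K / \<epsilon> \<ge> K" using e0 by (simp add: le_divide_eq)
  have mn: "real m \<ge> real n" using mK KE Kn by linarith
  then have mn': "n \<le> m" by simp
  show "\<exists>(L::learner) (m::nat) (r::nat).
        real m \<le> 16 * (1 / \<epsilon>) * (real n + real (min n W) * ln (real (W + n)) + ln (1 / \<delta>)) \<and>
        real r \<le> 16 * real m * (real W)^2 * ln (real n) \<and>
        robustly_learns L n (ltf_class n W) \<rho> \<epsilon> \<delta> m r"
  proof (rule exI[of _ "Lrn n W \<rho>"], rule exI[of _ m], rule exI[of _ r], intro conjI)
    have "real m \<le> K / \<epsilon> + real n / \<epsilon>"
    proof -
      have "1 \<le> real n / \<epsilon>" using n e0 e1 by (simp add: le_divide_eq)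
      then show ?thesis using mK2 by linarith
    qed
    also have "\<dots> = (K + real n) / \<epsilon>" by (simp add: add_divide_distrib)
    also have "\<dots> \<le> (16 * T) / \<epsilon>" using KT e0 by (intro divide_right_mono) auto
    finally show "real m \<le> 16 * (1 / \<epsilon>) * (real n + real (min n W) * ln (real (W + n)) + ln (1 / \<delta>))"
      by (simp add: T_def)
  next
    have rr: "real r = real m + 2 * real W * (real n + 1)" by (simp add: r_def algebra_simps)
    have a1: "2 * real W * (real n + 1) \<le> 2 * real W * (2 * real m)"
      using mn n by (intro mult_left_mono) auto
    have W2: "real W \<le> (real W)^2" using W by (simp add: power2_eq_square)
    have "1 \<le> real W" using W by simp
    then have W1: "1 \<le> (real W)^2" using W2 by linarith
    have a2: "real W * real m \<le> (real W)^2 * real m" using W2 by (intro mult_right_mono) auto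
    have a3: "real m \<le> (real W)^2 * real m" using mult_right_mono[OF W1, of "real m"] by simp
    have r5: "real r \<le> 5 * ((real W)^2 * real m)" using rr a1 a2 a3 by (simp add: algebra_simps)
    have ln5: "5 \<le> 16 * ln (real n)"
    proof -
      have "ln 2 \<le> ln (real n)" using n by (intro ln_mono) auto
      then show ?thesis using ln2_half by linarith
    qed
    have "5 * ((real W)^2 * real m) \<le> (16 * ln (real n)) * ((real W)^2 * real m)"
      using ln5 by (intro mult_right_mono) auto
    then show "real r \<le> 16 * real m * (real W)^2 * ln (real n)" using r5 by (simp add: algebra_simps)
  next
    have bound: "real (card (Pset n W)) * (1 - \<epsilon>) ^ m \<le> \<delta>"
    proof -
      define P where "P = real (card (Pset n W))"
      have P1: "P \<ge> 1" using Pset_card_pos[of n W] by (simp add: P_def)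
      have lnP: "ln P \<le> 4 * real (min n W) * ln (real (W + n))" using ln_card[OF n W] by (simp add: P_def)
      have "(1 - \<epsilon>) ^ m \<le> exp (- \<epsilon>) ^ m"
        using e1 exp_ge_add_one_self[of "-\<epsilon>"] by (intro power_mono) auto
      also have "\<dots> = exp (- (\<epsilon> * real m))" by (simp add: exp_of_nat_mult[symmetric] algebra_simps)
      also have "\<dots> \<le> exp (- ln P - ln (1 / \<delta>))"
      proof -
        have "\<epsilon> * real m \<ge> K" using mK e0 by (simp add: divide_le_eq mult.commute)
        then have "\<epsilon> * real m \<ge> ln P + ln (1 / \<delta>)" using lnP n by (simp add: K_def)
        then show ?thesis by simp
      qed
      also have "\<dots> = \<delta> / P" using P1 d0 by (simp add: exp_diff exp_minus field_simps)
      finally have "(1 - \<epsilon>) ^ m \<le> \<delta> / P" .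
      then have "P * (1 - \<epsilon>) ^ m \<le> P * (\<delta> / P)" using P1 by (intro mult_left_mono) auto
      also have "\<dots> = \<delta>" using P1 by simp
      finally show ?thesis by (simp add: P_def)
    qed
    show "robustly_learns (Lrn n W \<rho>) n (ltf_class n W) \<rho> \<epsilon> \<delta> m r"
      unfolding robustly_learns_def
    proof (intro allI impI)
      fix D :: "point pmf" and c :: concept assume D: "set_pmf D \<subseteq> {x. length x = n}" and c: "c \<in> ltf_class n W"
      have pb: "measure_pmf.prob (replicate_pmf m D) {xs. \<not> learner_succeeds (Lrn n W \<rho>) \<rho> r D c \<epsilon> xs} \<le> \<delta>"
        using prob_main[OF D c e0, of m \<rho>] e1 bound by (simp add: r_def)
      have "measure_pmf.prob (replicate_pmf m D) {xs. learner_succeeds (Lrn n W \<rho>) \<rho> r D c \<epsilon> xs}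
          = measure_pmf.prob (replicate_pmf m D) (UNIV - {xs. \<not> learner_succeeds (Lrn n W \<rho>) \<rho> r D c \<epsilon> xs})"
        by (rule arg_cong[where f="measure_pmf.prob (replicate_pmf m D)"]) auto
      also have "\<dots> = 1 - measure_pmf.prob (replicate_pmf m D) {xs. \<not> learner_succeeds (Lrn n W \<rho>) \<rho> r D c \<epsilon> xs}"
        using measure_pmf.prob_compl[of "{xs. \<not> learner_succeeds (Lrn n W \<rho>) \<rho> r D c \<epsilon> xs}" "replicate_pmf m D"]
        by simp
      finally show "1 - \<delta> \<le> measure_pmf.prob (replicate_pmf m D) {xs. learner_succeeds (Lrn n W \<rho>) \<rho> r D c \<epsilon> xs}"
        using pb by linarith
    qed
  qed
qed

end
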